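(* For every positive integer $n$, \[ \sum_{j=1}^{n}\left(\binom{n}{j}-1\right)\frac{B_j}{j}\left(1-2^{-j}\right)=\frac{1-2^{n-1}}{2^n}. \]
   Context: $B_j$ is the $j$th Bernoulli number ($\frac{t}{e^t-1}=\sum_{m\ge0}B_m\frac{t^m}{m!}$, so $B_1=-1/2$). *)

theory Defs
  imports Complex_Main "HOL-Computational_Algebra.Formal_Power_Series"
begin

text \<open>Bernoulli numbers via the exponential generating function
  t/(e^t - 1) = sum_m B_m t^m / m!, so that B_1 = -1/2.\<close>
definition bernoulli :: "nat \<Rightarrow> real" where
  "bernoulli m = fact m * fps_nth (fps_X / (fps_exp 1 - 1)) m"

end

theory Submission
  imports Defs
begin
unbundle fps_syntax

definition BA :: "real fps" where "BA = fps_X / (fps_exp 1 - 1)"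

lemma BA_mult: "BA * (fps_exp 1 - 1) = fps_X"
proof -
  have ne: "(fps_exp (1::real) - 1) \<noteq> 0"
  proof
    assume "fps_exp (1::real) - 1 = 0"
    hence "(fps_exp (1::real) - 1) $ 1 = 0" by simp
    thus False by simp
  qed
  have sd: "subdegree (fps_exp (1::real) - 1) = 1"
    by (rule subdegreeI) auto
  show ?thesis unfolding BA_def
    by (rule fps_times_divide_eq) (use ne sd in auto)
qed

lemma bern_BA: "bernoulli m = fact m * BA $ m"
  unfolding bernoulli_def BA_def by simp

lemma coeff_conv:
  fixes a :: real and m :: nat
  shows "fact m * (BA * fps_exp a) $ m = (\<Sum>j\<le>m. real (m choose j) * bernoulli j * a ^ (m - j))"
proof -
  have "fact m * (BA * fps_exp a) $ m = (\<Sum>j=0..m. fact m * (BA $ j * (a ^ (m-j) / fact (m-j))))"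
    by (simp add: fps_mult_nth sum_distrib_left)
  also have "\<dots> = (\<Sum>j\<le>m. real (m choose j) * bernoulli j * a ^ (m - j))"
    by (rule sum.cong) (auto simp: bern_BA binomial_fact field_simps atLeast0AtMost)
  finally show ?thesis .
qed

lemma I1:
  assumes "m \<ge> 2"
  shows "(\<Sum>j<m. real (m choose j) * bernoulli j) = 0"
proof -
  have "BA * fps_exp 1 = BA + fps_X" using BA_mult by (simp add: algebra_simps)
  hence "(BA * fps_exp 1) $ m = BA $ m" using assms by simp
  hence "fact m * (BA * fps_exp 1) $ m = bernoulli m" by (simp add: bern_BA)
  hence "(\<Sum>j\<le>m. real (m choose j) * bernoulli j * 1 ^ (m - j)) = bernoulli m"
    by (simp only: coeff_conv)
  thus ?thesis by (simp add: lessThan_Suc_atMost[symmetric])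
qed

lemma I2:
  assumes "m \<ge> 2"
  shows "(\<Sum>j<m. real (m choose j) * bernoulli j * 2 ^ (m - j)) = real m"
proof -
  have e2: "fps_exp (2::real) = fps_exp 1 * fps_exp 1"
    using fps_exp_add_mult[of "1::real" 1] by simp
  have "BA * fps_exp 2 = BA + fps_X * (fps_exp 1 + 1)"
  proof -
    have "BA * fps_exp 2 - BA = BA * (fps_exp 1 - 1) * (fps_exp 1 + 1)"
      by (simp add: e2 algebra_simps)
    also have "\<dots> = fps_X * (fps_exp 1 + 1)" by (simp only: BA_mult)
    finally show ?thesis by (metis diff_eq_eq add.commute)
  qed
  hence "(BA * fps_exp 2) $ m = BA $ m + 1 / fact (m - 1)" using assms
    by (simp add: fps_X_mult_nth)
  hence "fact m * (BA * fps_exp 2) $ m = bernoulli m + fact m / fact (m - 1)"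
    by (simp add: bern_BA algebra_simps)
  also have "fact m / fact (m - 1) = (real m :: real)"
    using assms fact_reduce[of m] by (simp add: field_simps)
  finally have "(\<Sum>j\<le>m. real (m choose j) * bernoulli j * 2 ^ (m - j)) = bernoulli m + real m"
    by (simp only: coeff_conv)
  thus ?thesis by (simp add: lessThan_Suc_atMost[symmetric])
qed

lemma powi_eq: "(2::real) powi (- int j) = 1 / 2 ^ j"
  by (simp add: power_int_minus divide_inverse)

lemma J:
  assumes "m \<ge> 2"
  shows "(\<Sum>j<m. real (m choose j) * bernoulli j * (1 - 1 / 2 ^ j)) = - real m / 2 ^ m"
proof -
  have "(\<Sum>j<m. real (m choose j) * bernoulli j / 2 ^ j)
      = (\<Sum>j<m. real (m choose j) * bernoulli j * 2 ^ (m - j)) / 2 ^ m"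
    unfolding sum_divide_distrib
    by (rule sum.cong) (auto simp: field_simps power_add[symmetric])
  also have "\<dots> = real m / 2 ^ m" using I2[OF assms] by simp
  finally have a: "(\<Sum>j<m. real (m choose j) * bernoulli j / 2 ^ j) = real m / 2 ^ m" .
  have "(\<Sum>j<m. real (m choose j) * bernoulli j * (1 - 1 / 2 ^ j))
     = (\<Sum>j<m. real (m choose j) * bernoulli j) - (\<Sum>j<m. real (m choose j) * bernoulli j / 2 ^ j)"
    by (simp add: sum_subtractf[symmetric] algebra_simps)
  thus ?thesis using a I1[OF assms] by simp
qed

definition cc :: "nat \<Rightarrow> real" where
  "cc j = bernoulli j / real j * (1 - 2 powi (- int j))"

lemma K:
  assumes "n \<ge> 1"
  shows "(\<Sum>k<n. real (n choose k) * cc (Suc k)) = - 1 / 2 ^ (Suc n)"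
proof -
  have t: "real (n choose k) * cc (Suc k)
        = real (Suc n choose Suc k) * bernoulli (Suc k) * (1 - 1 / 2 ^ Suc k) / real (Suc n)" for k
  proof -
    have "real (Suc n choose Suc k) * real (Suc k) = real (Suc n) * real (n choose k)"
      using Suc_times_binomial_eq[of n k] by (metis of_nat_mult mult.commute)
    hence y: "real (Suc n choose Suc k) = real (Suc n) * real (n choose k) / real (Suc k)"
      by (simp add: field_simps)
    show ?thesis unfolding y cc_def powi_eq by (simp del: of_nat_Suc)
  qed
  have "(\<Sum>k<n. real (n choose k) * cc (Suc k))
     = (\<Sum>k<n. real (Suc n choose Suc k) * bernoulli (Suc k) * (1 - 1 / 2 ^ Suc k)) / real (Suc n)"
    by (simp add: t sum_divide_distrib)
  also have "(\<Sum>k<n. real (Suc n choose Suc k) * bernoulli (Suc k) * (1 - 1 / 2 ^ Suc k))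
      = (\<Sum>j<Suc n. real (Suc n choose j) * bernoulli j * (1 - 1 / 2 ^ j))"
    by (simp only: sum.lessThan_Suc_shift) simp
  also have "\<dots> = - real (Suc n) / 2 ^ Suc n" using assms by (intro J) simp
  also have "- real (Suc n) / 2 ^ Suc n / real (Suc n) = - 1 / (2::real) ^ Suc n"
    by (simp del: of_nat_Suc)
  finally show ?thesis .
qed

theorem mainTheorem7:
  fixes n :: nat
  assumes "n \<ge> 1"
  shows "(\<Sum>j=1..n. (real (n choose j) - 1) * (bernoulli j / real j) * (1 - 2 powi (- int j)))
         = (1 - 2 ^ (n - 1)) / 2 ^ n"
  using assms
proof (induction n rule: dec_induct)
  case base
  show ?case by (simp add: bernoulli_def)
next
  case (step n)
  let ?f = "\<lambda>n. (\<Sum>j=1..n. (real (n choose j) - 1) * (bernoulli j / real j) * (1 - 2 powi (- int j)))"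
  have "?f (Suc n) = (\<Sum>j=1..Suc n. (real (Suc n choose j) - 1) * cc j)"
    by (simp add: cc_def mult.assoc)
  also have "\<dots> = (\<Sum>j=1..Suc n. (real (n choose j) - 1) * cc j) + (\<Sum>j=1..Suc n. real (n choose (j - 1)) * cc j)"
  proof -
    have "(\<Sum>j=1..Suc n. (real (Suc n choose j) - 1) * cc j)
       = (\<Sum>j=1..Suc n. (real (n choose j) - 1) * cc j + real (n choose (j - 1)) * cc j)"
    proof (rule sum.cong[OF refl])
      fix j assume "j \<in> {1..Suc n}"
      then obtain i where "j = Suc i" by (cases j) auto
      thus "(real (Suc n choose j) - 1) * cc j = (real (n choose j) - 1) * cc j + real (n choose (j - 1)) * cc j"
        by (simp add: algebra_simps)
    qed
    thus ?thesis by (simp only: sum.distrib)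
  qed
  also have "(\<Sum>j=1..Suc n. (real (n choose j) - 1) * cc j) = ?f n - cc (Suc n)"
    by (simp add: cc_def mult.assoc binomial_eq_0)
  also have "(\<Sum>j=1..Suc n. real (n choose (j - 1)) * cc j) = (\<Sum>k<Suc n. real (n choose k) * cc (Suc k))"
    by (rule sum.reindex_bij_witness[of _ Suc "\<lambda>j. j - 1"]) auto
  also have "\<dots> = (\<Sum>k<n. real (n choose k) * cc (Suc k)) + cc (Suc n)" by simp
  also have "(\<Sum>k<n. real (n choose k) * cc (Suc k)) = - 1 / 2 ^ Suc n" using K step(1) .
  finally have rec: "?f (Suc n) = ?f n - 1 / 2 ^ Suc n" by simp
  have ih: "?f n = (1 - 2 ^ (n - 1)) / 2 ^ n" using step(3) .
  obtain m where m: "n = Suc m" using step(1) by (cases n) auto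
  have ar: "(1 - 2 ^ m) / 2 ^ Suc m - 1 / 2 ^ Suc (Suc m) = (1 - 2 ^ Suc m) / (2::real) ^ Suc (Suc m)"
    by (simp add: field_simps)
  show ?case unfolding rec ih using ar by (simp add: m)
qed

end
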